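(* Let $K$ be a nonempty finite set, $X=\Delta(K)$, and let $u,v\in\Delta(X)$ have finite supports $U$ and $V$. Then $d_3(u,v)\ge d_5(u,v)$.
   Context: $X=\Delta(K)\subset\mathbb R^K$ with $\|p\|_1=\sum_k|p^k|$. $\mathcal M_3(u,v)$ is the set of finite positive Borel measures $\gamma$ on $X^2\times[0,1]^2$ such that for all continuous $f:X\to\mathbb R$: - $\int\lambda f(x)\,d\gamma(x,y,\lambda,\mu)=u(f)$, and - $\int\mu f(y)\,d\gamma=v(f)$. Then $d_3(u,v)=\inf_{\gamma\in\mathcal M_3(u,v)}\int\|\lambda x-\mu y\|_1\,d\gamma$. $\mathcal M_5(u,v)$ is the set of $(\alpha,\beta)\in(\mathbb R_+^{U\times V})^2$ with: - $\sum_{y'\in V}\alpha(x,y')\le u(x)$ for all $x\in U$, and - $\sum_{x'\in U}\beta(x',y)\le v(y)$ for all $y\in V$. Then $$d_5(u,v)=\inf_{(\alpha,\beta)\in\mathcal M_5(u,v)}\Big(2+\sum_{(x,y)\in U\times V}\big(\|\alpha(x,y)x-\beta(x,y)y\|_1-\alpha(x,y)-\beta(x,y)\big)\Big).$$ *)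

theory Defs
  imports "HOL-Probability.Probability"
begin

text \<open>K is modelled by a finite (hence nonempty) type 'k; points of R^K are real^'k.\<close>

definition l1norm :: "real ^ 'k::finite \<Rightarrow> real" where
  "l1norm p = (\<Sum>k\<in>UNIV. \<bar>p $ k\<bar>)"

definition DeltaK :: "(real ^ 'k::finite) set" where
  "DeltaK = {p. (\<forall>k. 0 \<le> p $ k) \<and> (\<Sum>k\<in>UNIV. p $ k) = 1}"

definition space3 :: "((real ^ 'k::finite) \<times> (real ^ 'k) \<times> real \<times> real) set" where
  "space3 = DeltaK \<times> DeltaK \<times> {0..1} \<times> {0..1}"

definition M3 :: "(real ^ 'k::finite) pmf \<Rightarrow> (real ^ 'k) pmf
    \<Rightarrow> ((real ^ 'k) \<times> (real ^ 'k) \<times> real \<times> real) measure set" where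
  "M3 u v = {\<gamma>. sets \<gamma> = sets (restrict_space borel space3) \<and> space \<gamma> = space3 \<and>
      finite_measure \<gamma> \<and>
      (\<forall>f. continuous_on DeltaK f \<longrightarrow>
          integral\<^sup>L \<gamma> (\<lambda>(x,y,l,m). l * f x) = measure_pmf.expectation u f \<and>
          integral\<^sup>L \<gamma> (\<lambda>(x,y,l,m). m * f y) = measure_pmf.expectation v f)}"

definition d3 :: "(real ^ 'k::finite) pmf \<Rightarrow> (real ^ 'k) pmf \<Rightarrow> real" where
  "d3 u v = Inf ((\<lambda>\<gamma>. integral\<^sup>L \<gamma> (\<lambda>(x,y,l,m). l1norm (l *\<^sub>R x - m *\<^sub>R y))) ` M3 u v)"

text \<open>M_5(u,v): nonnegative alpha, beta on U x V (U, V the supports), with row/column bounds.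
  Values outside U x V are irrelevant.\<close>
definition M5 :: "(real ^ 'k::finite) pmf \<Rightarrow> (real ^ 'k) pmf
    \<Rightarrow> (((real ^ 'k) \<Rightarrow> (real ^ 'k) \<Rightarrow> real) \<times> ((real ^ 'k) \<Rightarrow> (real ^ 'k) \<Rightarrow> real)) set" where
  "M5 u v = {(\<alpha>,\<beta>).
      (\<forall>x\<in>set_pmf u. \<forall>y\<in>set_pmf v. 0 \<le> \<alpha> x y \<and> 0 \<le> \<beta> x y) \<and>
      (\<forall>x\<in>set_pmf u. (\<Sum>y'\<in>set_pmf v. \<alpha> x y') \<le> pmf u x) \<and>
      (\<forall>y\<in>set_pmf v. (\<Sum>x'\<in>set_pmf u. \<beta> x' y) \<le> pmf v y)}"

definition d5 :: "(real ^ 'k::finite) pmf \<Rightarrow> (real ^ 'k) pmf \<Rightarrow> real" where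
  "d5 u v = Inf ((\<lambda>(\<alpha>,\<beta>). 2 + (\<Sum>(x,y)\<in>set_pmf u \<times> set_pmf v.
        l1norm (\<alpha> x y *\<^sub>R x - \<beta> x y *\<^sub>R y) - \<alpha> x y - \<beta> x y)) ` M5 u v)"

end

theory Submission
  imports Defs
begin

lemma DeltaK_bounds:
  assumes "x \<in> DeltaK"
  shows "0 \<le> x $ k" "x $ k \<le> 1" "(\<Sum>k\<in>UNIV. x $ k) = 1"
proof -
  have nn: "\<forall>k. 0 \<le> x $ k" and s: "(\<Sum>k\<in>UNIV. x $ k) = 1" using assms by (auto simp: DeltaK_def)
  show "0 \<le> x $ k" using nn by auto
  show "(\<Sum>k\<in>UNIV. x $ k) = 1" by fact
  have "x $ k \<le> (\<Sum>k\<in>UNIV. x $ k)"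
    by (rule member_le_sum) (use nn in auto)
  then show "x $ k \<le> 1" using s by simp
qed

lemma l1norm_lower:
  assumes "x \<in> DeltaK" "y \<in> DeltaK"
  shows "\<bar>l - m\<bar> \<le> l1norm (l *\<^sub>R x - m *\<^sub>R y)"
proof -
  have "l - m = (\<Sum>k\<in>UNIV. l * x $ k - m * y $ k)"
    using DeltaK_bounds(3)[OF assms(1)] DeltaK_bounds(3)[OF assms(2)]
    by (simp add: sum_subtractf sum_distrib_left[symmetric])
  also have "\<bar>\<dots>\<bar> \<le> (\<Sum>k\<in>UNIV. \<bar>l * x $ k - m * y $ k\<bar>)" by (rule sum_abs)
  finally show ?thesis by (simp add: l1norm_def)
qed

lemma l1norm_upper:
  assumes "x \<in> DeltaK" "y \<in> DeltaK" "0 \<le> l" "0 \<le> m"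
  shows "l1norm (l *\<^sub>R x - m *\<^sub>R y) \<le> l + m"
proof -
  have "l1norm (l *\<^sub>R x - m *\<^sub>R y) = (\<Sum>k\<in>UNIV. \<bar>l * x $ k - m * y $ k\<bar>)" by (simp add: l1norm_def)
  also have "\<dots> \<le> (\<Sum>k\<in>UNIV. l * x $ k + m * y $ k)"
    apply (rule sum_mono)
    using DeltaK_bounds(1)[OF assms(1)] DeltaK_bounds(1)[OF assms(2)] assms(3,4)
    by (smt (verit) mult_nonneg_nonneg)
  also have "\<dots> = l + m"
    using DeltaK_bounds(3)[OF assms(1)] DeltaK_bounds(3)[OF assms(2)]
    by (simp add: sum.distrib sum_distrib_left[symmetric])
  finally show ?thesis .
qed

lemma l1norm_nonneg: "0 \<le> l1norm p"
  by (simp add: l1norm_def sum_nonneg)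

lemma M3_nonempty:
  fixes u v :: "(real ^ 'k::finite) pmf"
  assumes "set_pmf u \<subseteq> DeltaK" and "set_pmf v \<subseteq> DeltaK"
  shows "M3 u v \<noteq> {}"
proof -
  obtain e where e: "e \<in> set_pmf u" using set_pmf_not_empty[of u] by blast
  then have eD: "e \<in> DeltaK" using assms by auto
  define g where "g = (\<lambda>(x::real^'k,y::real^'k). if x \<in> DeltaK \<and> y \<in> DeltaK then (x,y,1::real,1::real) else (e,e,1,1))"
  define N where "N = (restrict_space borel space3 :: ((real ^ 'k) \<times> (real ^ 'k) \<times> real \<times> real) measure)"
  have spN: "space N = space3" by (simp add: N_def space_restrict_space)
  have gm: "g \<in> measure_pmf (pair_pmf u v) \<rightarrow>\<^sub>M N"
    unfolding measurable_pmf_measure1 spN using eD by (auto simp: g_def space3_def)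
  define \<gamma> where "\<gamma> = distr (measure_pmf (pair_pmf u v)) N g"
  have "\<gamma> \<in> M3 u v"
    unfolding M3_def
  proof (intro CollectI conjI allI impI)
    show "sets \<gamma> = sets (restrict_space borel space3)" by (simp add: \<gamma>_def N_def)
    show "space \<gamma> = space3" by (simp add: \<gamma>_def spN)
    show "finite_measure \<gamma>" unfolding \<gamma>_def
      by (intro prob_space.finite_measure prob_space.prob_space_distr gm) (simp add: measure_pmf.prob_space_axioms)
  next
    fix f :: "real ^ 'k \<Rightarrow> real" assume fc: "continuous_on DeltaK f"
    have c1: "continuous_on space3 (\<lambda>(x::real^'k,y::real^'k,l::real,m::real). l * f x)"
    proof -
      have "continuous_on space3 (\<lambda>p::(real^'k)\<times>(real^'k)\<times>real\<times>real. fst (snd (snd p)) * f (fst p))"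
        by (intro continuous_intros continuous_on_compose2[OF fc]) (auto simp: space3_def)
      then show ?thesis by (simp add: case_prod_beta')
    qed
    have c2: "continuous_on space3 (\<lambda>(x::real^'k,y::real^'k,l::real,m::real). m * f y)"
    proof -
      have "continuous_on space3 (\<lambda>p::(real^'k)\<times>(real^'k)\<times>real\<times>real. snd (snd (snd p)) * f (fst (snd p)))"
        by (intro continuous_intros continuous_on_compose2[OF fc]) (auto simp: space3_def)
      then show ?thesis by (simp add: case_prod_beta')
    qed
    have "integral\<^sup>L \<gamma> (\<lambda>(x,y,l,m). l * f x) = measure_pmf.expectation (pair_pmf u v) (\<lambda>p. (\<lambda>(x,y,l,m). l * f x) (g p))"
      unfolding \<gamma>_def using borel_measurable_continuous_on_restrict[OF c1] gm
      by (subst integral_distr) (auto simp: N_def)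
    also have "\<dots> = measure_pmf.expectation (pair_pmf u v) (\<lambda>p. f (fst p))"
      by (intro integral_cong_AE) (use assms in \<open>auto simp: g_def AE_measure_pmf_iff\<close>)
    also have "\<dots> = measure_pmf.expectation u f"
      by (metis integral_map_pmf map_fst_pair_pmf)
    finally show "integral\<^sup>L \<gamma> (\<lambda>(x,y,l,m). l * f x) = measure_pmf.expectation u f" .
    have "integral\<^sup>L \<gamma> (\<lambda>(x,y,l,m). m * f y) = measure_pmf.expectation (pair_pmf u v) (\<lambda>p. (\<lambda>(x,y,l,m). m * f y) (g p))"
      unfolding \<gamma>_def using borel_measurable_continuous_on_restrict[OF c2] gm
      by (subst integral_distr) (auto simp: N_def)
    also have "\<dots> = measure_pmf.expectation (pair_pmf u v) (\<lambda>p. f (snd p))"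
      by (intro integral_cong_AE) (use assms in \<open>auto simp: g_def AE_measure_pmf_iff\<close>)
    also have "\<dots> = measure_pmf.expectation v f"
      by (metis integral_map_pmf map_snd_pair_pmf)
    finally show "integral\<^sup>L \<gamma> (\<lambda>(x,y,l,m). m * f y) = measure_pmf.expectation v f" .
  qed
  then show ?thesis by blast
qed

type_synonym 'k pt = "(real ^ 'k) \<times> (real ^ 'k) \<times> real \<times> real"

lemma M3_props:
  assumes "\<gamma> \<in> M3 u v"
  shows "sets \<gamma> = sets (restrict_space borel space3)" "space \<gamma> = space3" "finite_measure \<gamma>"
  using assms by (auto simp: M3_def)

lemma meas_borel:
  assumes "\<gamma> \<in> M3 u v" "(f::'k::finite pt \<Rightarrow> real) \<in> borel_measurable borel"
  shows "f \<in> borel_measurable \<gamma>"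
  by (subst measurable_cong_sets[OF M3_props(1)[OF assms(1)] refl]) (rule measurable_restrict_space1[OF assms(2)])

lemma meas_borel':
  assumes "\<gamma> \<in> M3 u v" "(f::'k::finite pt \<Rightarrow> 'b::topological_space) \<in> borel_measurable borel"
  shows "f \<in> borel_measurable \<gamma>"
  by (subst measurable_cong_sets[OF M3_props(1)[OF assms(1)] refl]) (rule measurable_restrict_space1[OF assms(2)])

lemma integ_bound:
  assumes "\<gamma> \<in> M3 u v" "(f::'k::finite pt \<Rightarrow> real) \<in> borel_measurable \<gamma>"
    "\<And>p. p \<in> space3 \<Longrightarrow> \<bar>f p\<bar> \<le> B"
  shows "integrable \<gamma> f"
  using M3_props[OF assms(1)] assms(2,3)
  by (intro finite_measure.integrable_const_bound[where B=B]) (auto intro!: AE_I2)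

locale marg =
  fixes \<gamma> :: "'k::finite pt measure" and u v :: "(real ^ 'k) pmf"
    and L :: "'k pt \<Rightarrow> real" and X :: "'k pt \<Rightarrow> real ^ 'k" and w :: "(real ^ 'k) pmf"
  assumes gM: "\<gamma> \<in> M3 u v" and Lc: "continuous_on UNIV L" and Xc: "continuous_on UNIV X"
    and Lb: "\<And>p. p \<in> space3 \<Longrightarrow> 0 \<le> L p \<and> L p \<le> 1"
    and wfin: "finite (set_pmf w)"
    and hyp: "\<And>f. continuous_on DeltaK f \<Longrightarrow> integral\<^sup>L \<gamma> (\<lambda>p. L p * f (X p)) = measure_pmf.expectation w f"
begin

lemma Lm: "L \<in> borel_measurable \<gamma>"
  by (rule meas_borel[OF gM borel_measurable_continuous_onI[OF Lc]])

lemma Xm: "X \<in> borel_measurable \<gamma>"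
  by (rule meas_borel'[OF gM borel_measurable_continuous_onI[OF Xc]])

lemma Lint: "integrable \<gamma> L"
  by (rule integ_bound[OF gM Lm, where B=1]) (use Lb in force)

lemma G3: "integral\<^sup>L \<gamma> L = 1"
  using hyp[of "\<lambda>_. 1"] by simp

lemma G2:
  assumes x0: "x0 \<in> set_pmf w"
  shows "integral\<^sup>L \<gamma> (\<lambda>p. L p * indicator {x0} (X p)) \<le> pmf w x0"
proof -
  obtain d where d: "d > 0" "\<And>a. a \<in> set_pmf w \<Longrightarrow> a \<noteq> x0 \<Longrightarrow> d \<le> dist x0 a"
    using finite_set_avoid[OF wfin, of x0] by blast
  define g where "g = (\<lambda>z. max 0 (1 - dist z x0 / d))"
  have gc: "continuous_on UNIV g" unfolding g_def by (intro continuous_intros) (use d in auto)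
  have "measure_pmf.expectation w g = (\<Sum>a\<in>{x0}. g a * pmf w a)"
  proof (rule integral_measure_pmf_real)
    fix a assume "a \<in> set_pmf w" "g a \<noteq> 0"
    then show "a \<in> {x0}" using d by (force simp: g_def dist_commute field_simps)
  qed simp
  also have "\<dots> = pmf w x0" by (simp add: g_def)
  finally have E: "measure_pmf.expectation w g = pmf w x0" .
  have gm: "(\<lambda>p. L p * g (X p)) \<in> borel_measurable \<gamma>"
    using Lm Xm borel_measurable_continuous_onI[OF gc] by measurable
  have im: "(\<lambda>p. L p * indicator {x0} (X p)) \<in> borel_measurable \<gamma>"
    using Lm Xm by measurable
  have "integral\<^sup>L \<gamma> (\<lambda>p. L p * indicator {x0} (X p)) \<le> integral\<^sup>L \<gamma> (\<lambda>p. L p * g (X p))"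
  proof (rule integral_mono)
    show "integrable \<gamma> (\<lambda>p. L p * indicator {x0} (X p))"
      by (rule integ_bound[OF gM im, where B=1]) (use Lb in \<open>auto simp: indicator_def abs_mult\<close>)
    show "integrable \<gamma> (\<lambda>p. L p * g (X p))"
      by (rule integ_bound[OF gM gm, where B=1]) (use Lb d(1) in \<open>auto simp: g_def abs_mult intro!: mult_le_one\<close>)
    fix p assume "p \<in> space \<gamma>"
    then have "0 \<le> L p" using Lb M3_props(2)[OF gM] by auto
    moreover have "indicator {x0} (X p) \<le> g (X p)" by (auto simp: indicator_def g_def)
    ultimately show "L p * indicator {x0} (X p) \<le> L p * g (X p)" by (rule mult_left_mono[rotated])
  qed
  also have "\<dots> = pmf w x0" using hyp[OF continuous_on_subset[OF gc]] E by simp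
  finally show ?thesis .
qed


lemma G1: "integral\<^sup>L \<gamma> (\<lambda>p. L p * indicator (- set_pmf w) (X p)) = 0"
proof -
  let ?W = "set_pmf w"
  define s where "s = (\<lambda>n::nat. \<lambda>p. L p * min 1 (real n * infdist (X p) ?W))"
  define F where "F = (\<lambda>p. L p * indicator (- ?W) (X p))"
  have fc: "continuous_on UNIV (\<lambda>z::real^'k. min 1 (real n * infdist z ?W))" for n
    by (intro continuous_intros continuous_on_infdist)
  have sm: "s n \<in> borel_measurable \<gamma>" for n
    unfolding s_def using Lm Xm borel_measurable_continuous_onI[OF fc[of n]] by measurable
  have cl: "closed ?W" using wfin by (rule finite_imp_closed)
  have "(\<lambda>p. indicator (- ?W) (X p) :: real) \<in> borel_measurable \<gamma>"
    by (rule measurable_compose[OF Xm borel_measurable_indicator]) (intro borel_open open_Compl cl)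
  then have Fm: "F \<in> borel_measurable \<gamma>"
    unfolding F_def using Lm by (intro borel_measurable_times)
  have s0: "integral\<^sup>L \<gamma> (s n) = 0" for n
  proof -
    have "integral\<^sup>L \<gamma> (s n) = measure_pmf.expectation w (\<lambda>z. min 1 (real n * infdist z ?W))"
      unfolding s_def by (rule hyp[OF continuous_on_subset[OF fc]]) simp
    also have "\<dots> = (\<Sum>a\<in>{}. (\<lambda>z. min 1 (real n * infdist z ?W)) a * pmf w a)"
      by (rule integral_measure_pmf_real) (auto simp: infdist_zero)
    finally show ?thesis by simp
  qed
  have lim: "(\<lambda>n. integral\<^sup>L \<gamma> (s n)) \<longlonglongrightarrow> integral\<^sup>L \<gamma> F"
  proof (rule integral_dominated_convergence[OF Fm sm Lint])
    show "AE p in \<gamma>. (\<lambda>n. s n p) \<longlonglongrightarrow> F p"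
    proof (rule AE_I2)
      fix p
      show "(\<lambda>n. s n p) \<longlonglongrightarrow> F p"
      proof (cases "X p \<in> ?W")
        case True
        then show ?thesis by (simp add: s_def F_def infdist_zero)
      next
        case False
        have pos: "infdist (X p) ?W > 0"
          using infdist_pos_not_in_closed[OF cl set_pmf_not_empty False] by blast
        obtain N :: nat where N: "1 / infdist (X p) ?W < real N" using reals_Archimedean2 by blast
        have "eventually (\<lambda>n. s n p = F p) sequentially"
          unfolding eventually_sequentially
        proof (intro exI allI impI)
          fix n assume "N \<le> n"
          then have "1 / infdist (X p) ?W < real n" using N by linarith
          then have "1 \<le> real n * infdist (X p) ?W" using pos by (simp add: field_simps)
          then show "s n p = F p" using False by (simp add: s_def F_def)
        qed
        then show ?thesis by (rule tendsto_eventually)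
      qed
    qed
    fix n
    show "AE p in \<gamma>. norm (s n p) \<le> L p"
    proof (rule AE_I2)
      fix p assume "p \<in> space \<gamma>"
      then have "0 \<le> L p" "L p \<le> 1" using Lb M3_props(2)[OF gM] by auto
      moreover have "0 \<le> min 1 (real n * infdist (X p) ?W)" by (simp add: infdist_nonneg)
      ultimately show "norm (s n p) \<le> L p"
        by (auto simp: s_def abs_mult intro!: mult_left_le)
    qed
  qed
  then have "(\<lambda>n. 0::real) \<longlonglongrightarrow> integral\<^sup>L \<gamma> F" by (simp add: s0)
  then have "integral\<^sup>L \<gamma> F = 0" using LIMSEQ_unique tendsto_const by blast
  then show ?thesis by (simp add: F_def)
qed


lemma Iint: "integrable \<gamma> (\<lambda>p. L p * indicator {x0} (X p))"
proof -
  have im: "(\<lambda>p. L p * indicator {x0} (X p)) \<in> borel_measurable \<gamma>"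
    using Lm Xm by measurable
  show ?thesis
    by (rule integ_bound[OF gM im, where B=1]) (use Lb in \<open>auto simp: indicator_def abs_mult\<close>)
qed

lemma Am: "(\<lambda>p. L p * indicator (- set_pmf w) (X p)) \<in> borel_measurable \<gamma>"
proof -
  have cl: "closed (set_pmf w)" using wfin by (rule finite_imp_closed)
  have "(\<lambda>p. indicator (- set_pmf w) (X p) :: real) \<in> borel_measurable \<gamma>"
    by (rule measurable_compose[OF Xm borel_measurable_indicator]) (intro borel_open open_Compl cl)
  then show ?thesis using Lm by (intro borel_measurable_times)
qed

lemma Aint: "integrable \<gamma> (\<lambda>p. L p * indicator (- set_pmf w) (X p))"
  by (rule integ_bound[OF gM Am, where B=1]) (use Lb in \<open>auto simp: indicator_def abs_mult\<close>)

end

lemma pointwise: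
  fixes U V :: "'a set" and h l m :: real
  assumes "finite U" "finite V" "0 \<le> l" "0 \<le> m" "\<bar>l - m\<bar> \<le> h" "0 \<le> h"
  shows "(\<Sum>q\<in>U \<times> V. (if q = (x,y) then 1 else 0) * (h - l - m)) + l + m
      - 2 * (l * indicator (-U) x) - 2 * (m * indicator (-V) y) \<le> h"
proof -
  have "(\<Sum>q\<in>U \<times> V. (if q = (x,y) then 1 else 0) * (h - l - m)) = (\<Sum>q\<in>U \<times> V. if q = (x,y) then h - l - m else 0)"
    by (intro sum.cong) auto
  also have "\<dots> = (if (x,y) \<in> U \<times> V then h - l - m else 0)"
    using assms(1,2) by (simp add: sum.delta')
  finally have e: "(\<Sum>q\<in>U \<times> V. (if q = (x,y) then 1 else 0) * (h - l - m)) = (if (x,y) \<in> U \<times> V then h - l - m else 0)" .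
  show ?thesis unfolding e using assms(3-6) by (auto simp: indicator_def)
qed


lemma main_bound:
  fixes u v :: "(real ^ 'k::finite) pmf" and \<gamma> :: "'k pt measure"
  assumes uD: "set_pmf u \<subseteq> DeltaK" and vD: "set_pmf v \<subseteq> DeltaK"
    and uf: "finite (set_pmf u)" and vf: "finite (set_pmf v)"
    and gM: "\<gamma> \<in> M3 u v"
  shows "\<exists>\<alpha> \<beta>. (\<alpha>,\<beta>) \<in> M5 u v \<and> 2 + (\<Sum>(x,y)\<in>set_pmf u \<times> set_pmf v.
        l1norm (\<alpha> x y *\<^sub>R x - \<beta> x y *\<^sub>R y) - \<alpha> x y - \<beta> x y)
      \<le> integral\<^sup>L \<gamma> (\<lambda>(x,y,l,m). l1norm (l *\<^sub>R x - m *\<^sub>R y))"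
proof -
  define lam where "lam = (\<lambda>p::'k pt. fst (snd (snd p)))"
  define mu where "mu = (\<lambda>p::'k pt. snd (snd (snd p)))"
  define Y where "Y = (\<lambda>p::'k pt. fst (snd p))"
  define h where "h = (\<lambda>p::'k pt. l1norm (lam p *\<^sub>R fst p - mu p *\<^sub>R Y p))"
  define I where "I = (\<lambda>(q::(real^'k) \<times> (real^'k)) (p::'k pt). indicator ({fst q} \<times> {snd q} \<times> UNIV) p :: real)"
  let ?U = "set_pmf u" and ?V = "set_pmf v"
  have sp: "space \<gamma> = space3" by (rule M3_props(2)[OF gM])
  have pb: "fst p \<in> DeltaK \<and> Y p \<in> DeltaK \<and> 0 \<le> lam p \<and> lam p \<le> 1 \<and> 0 \<le> mu p \<and> mu p \<le> 1"
    if "p \<in> space3" for p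
    using that by (auto simp: space3_def lam_def mu_def Y_def mem_Times_iff)
  have hyp1: "integral\<^sup>L \<gamma> (\<lambda>p. lam p * f (fst p)) = measure_pmf.expectation u f"
    if "continuous_on DeltaK f" for f :: "real^'k \<Rightarrow> real"
  proof -
    have "integral\<^sup>L \<gamma> (\<lambda>(x,y,l,m). l * f x) = measure_pmf.expectation u f" using gM that by (auto simp: M3_def)
    moreover have "(\<lambda>(x,y,l,m). l * f x) = (\<lambda>p::'k pt. lam p * f (fst p))" by (auto simp: lam_def)
    ultimately show ?thesis by simp
  qed
  have hyp2: "integral\<^sup>L \<gamma> (\<lambda>p. mu p * f (Y p)) = measure_pmf.expectation v f"
    if "continuous_on DeltaK f" for f :: "real^'k \<Rightarrow> real"
  proof -
    have "integral\<^sup>L \<gamma> (\<lambda>(x,y,l,m). m * f y) = measure_pmf.expectation v f" using gM that by (auto simp: M3_def)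
    moreover have "(\<lambda>(x,y,l,m). m * f y) = (\<lambda>p::'k pt. mu p * f (Y p))" by (auto simp: mu_def Y_def)
    ultimately show ?thesis by simp
  qed
  interpret A: marg \<gamma> u v lam fst u
  proof
    show "continuous_on UNIV lam" unfolding lam_def by (intro continuous_intros)
    show "continuous_on UNIV (fst :: 'k pt \<Rightarrow> _)" by (intro continuous_intros)
  qed (use gM hyp1 uf pb in auto)
  interpret B: marg \<gamma> u v mu Y v
  proof
    show "continuous_on UNIV mu" unfolding mu_def by (intro continuous_intros)
    show "continuous_on UNIV Y" unfolding Y_def by (intro continuous_intros)
  qed (use gM hyp2 vf pb in auto)
  have hm: "h \<in> borel_measurable \<gamma>"
  proof -
    have "continuous_on UNIV h" unfolding h_def l1norm_def lam_def mu_def Y_def by (intro continuous_intros)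
    then show ?thesis by (rule meas_borel[OF gM borel_measurable_continuous_onI])
  qed
  have Im: "I q \<in> borel_measurable \<gamma>" for q
    unfolding I_def
    by (rule meas_borel[OF gM borel_measurable_indicator[OF borel_closed]]) (intro closed_Times closed_singleton closed_UNIV)
  have Ieq: "I q p = (if q = (fst p, Y p) then 1 else 0)" for q p
    by (cases q; cases p) (auto simp: I_def Y_def indicator_def)
  have I01: "0 \<le> I q p" "I q p \<le> 1" for q p by (simp_all add: I_def)
  have hb: "0 \<le> h p \<and> h p \<le> 2" if "p \<in> space3" for p
    using pb[OF that] l1norm_upper[of "fst p" "Y p" "lam p" "mu p"] by (auto simp: h_def l1norm_nonneg)
  have int_h: "integrable \<gamma> h"
    by (rule integ_bound[OF gM hm, where B=2]) (use hb in force)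
  have int_Ih: "integrable \<gamma> (\<lambda>p. I q p * h p)" for q
  proof (rule integ_bound[OF gM borel_measurable_times[OF Im hm], where B=2])
    fix p :: "'k pt" assume "p \<in> space3"
    then have "0 \<le> h p" "h p \<le> 2" using hb by auto
    moreover have "0 \<le> I q p" "I q p \<le> 1" by (rule I01)+
    ultimately show "\<bar>I q p * h p\<bar> \<le> 2"
      by (simp add: abs_mult) (metis mult_left_le_one_le order_trans)
  qed
  have int_lI: "integrable \<gamma> (\<lambda>p. lam p * I q p)" for q
  proof (rule integ_bound[OF gM borel_measurable_times[OF A.Lm Im], where B=1])
    fix p :: "'k pt" assume "p \<in> space3"
    then have "0 \<le> lam p" "lam p \<le> 1" using pb by auto
    moreover have "0 \<le> I q p" "I q p \<le> 1" by (rule I01)+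
    ultimately show "\<bar>lam p * I q p\<bar> \<le> 1"
      by (simp add: abs_mult mult_le_one)
  qed
  have int_mI: "integrable \<gamma> (\<lambda>p. mu p * I q p)" for q
  proof (rule integ_bound[OF gM borel_measurable_times[OF B.Lm Im], where B=1])
    fix p :: "'k pt" assume "p \<in> space3"
    then have "0 \<le> mu p" "mu p \<le> 1" using pb by auto
    moreover have "0 \<le> I q p" "I q p \<le> 1" by (rule I01)+
    ultimately show "\<bar>mu p * I q p\<bar> \<le> 1"
      by (simp add: abs_mult mult_le_one)
  qed
  define \<alpha> where "\<alpha> = (\<lambda>a b. integral\<^sup>L \<gamma> (\<lambda>p. lam p * I (a,b) p))"
  define \<beta> where "\<beta> = (\<lambda>a b. integral\<^sup>L \<gamma> (\<lambda>p. mu p * I (a,b) p))"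

  have anneg: "0 \<le> \<alpha> a b" "0 \<le> \<beta> a b" for a b
    unfolding \<alpha>_def \<beta>_def using pb I01 sp
    by (auto intro!: integral_nonneg_AE AE_I2 mult_nonneg_nonneg)
  have sumI: "(\<Sum>b\<in>?V. I (a,b) p) \<le> indicator {a} (fst p)" for a p
  proof (cases "a = fst p")
    case True
    have "(\<Sum>b\<in>?V. I (a,b) p) = (\<Sum>b\<in>?V. if b = Y p then 1 else 0)"
      by (intro sum.cong) (auto simp: Ieq True)
    also have "\<dots> \<le> 1" using vf by (simp add: sum.delta')
    finally show ?thesis using True by simp
  next
    case False
    then have "(\<Sum>b\<in>?V. I (a,b) p) = 0" by (intro sum.neutral) (auto simp: Ieq)
    then show ?thesis by simp
  qed
  have sumI2: "(\<Sum>a\<in>?U. I (a,b) p) \<le> indicator {b} (Y p)" for b p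
  proof (cases "b = Y p")
    case True
    have "(\<Sum>a\<in>?U. I (a,b) p) = (\<Sum>a\<in>?U. if a = fst p then 1 else 0)"
      by (intro sum.cong) (auto simp: Ieq True)
    also have "\<dots> \<le> 1" using uf by (simp add: sum.delta')
    finally show ?thesis using True by simp
  next
    case False
    then have "(\<Sum>a\<in>?U. I (a,b) p) = 0" by (intro sum.neutral) (auto simp: Ieq)
    then show ?thesis by simp
  qed
  have row: "(\<Sum>b\<in>?V. \<alpha> a b) \<le> pmf u a" if a: "a \<in> ?U" for a
  proof -
    have "(\<Sum>b\<in>?V. \<alpha> a b) = integral\<^sup>L \<gamma> (\<lambda>p. \<Sum>b\<in>?V. lam p * I (a,b) p)"
      unfolding \<alpha>_def by (simp add: Bochner_Integration.integral_sum int_lI)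
    also have "\<dots> \<le> integral\<^sup>L \<gamma> (\<lambda>p. lam p * indicator {a} (fst p))"
    proof (rule integral_mono)
      show "integrable \<gamma> (\<lambda>p. \<Sum>b\<in>?V. lam p * I (a,b) p)" using int_lI by (intro Bochner_Integration.integrable_sum) auto
      show "integrable \<gamma> (\<lambda>p. lam p * indicator {a} (fst p))" by (rule A.Iint)
      fix p assume "p \<in> space \<gamma>"
      then have "0 \<le> lam p" using pb sp by auto
      then show "(\<Sum>b\<in>?V. lam p * I (a,b) p) \<le> lam p * indicator {a} (fst p)"
        using sumI[of a p] by (simp add: sum_distrib_left[symmetric] mult_left_mono)
    qed
    also have "\<dots> \<le> pmf u a" by (rule A.G2[OF a])
    finally show ?thesis .
  qed
  have col: "(\<Sum>a\<in>?U. \<beta> a b) \<le> pmf v b" if b: "b \<in> ?V" for b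
  proof -
    have "(\<Sum>a\<in>?U. \<beta> a b) = integral\<^sup>L \<gamma> (\<lambda>p. \<Sum>a\<in>?U. mu p * I (a,b) p)"
      unfolding \<beta>_def by (simp add: Bochner_Integration.integral_sum int_mI)
    also have "\<dots> \<le> integral\<^sup>L \<gamma> (\<lambda>p. mu p * indicator {b} (Y p))"
    proof (rule integral_mono)
      show "integrable \<gamma> (\<lambda>p. \<Sum>a\<in>?U. mu p * I (a,b) p)" using int_mI by (intro Bochner_Integration.integrable_sum) auto
      show "integrable \<gamma> (\<lambda>p. mu p * indicator {b} (Y p))" by (rule B.Iint)
      fix p assume "p \<in> space \<gamma>"
      then have "0 \<le> mu p" using pb sp by auto
      then show "(\<Sum>a\<in>?U. mu p * I (a,b) p) \<le> mu p * indicator {b} (Y p)"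
        using sumI2[of b p] by (simp add: sum_distrib_left[symmetric] mult_left_mono)
    qed
    also have "\<dots> \<le> pmf v b" by (rule B.G2[OF b])
    finally show ?thesis .
  qed
  have inM5: "(\<alpha>,\<beta>) \<in> M5 u v"
    unfolding M5_def using anneg row col by auto

  let ?S = "?U \<times> ?V"
  have key1: "l1norm (\<alpha> a b *\<^sub>R a - \<beta> a b *\<^sub>R b) \<le> integral\<^sup>L \<gamma> (\<lambda>p. I (a,b) p * h p)" for a b
  proof -
    define g where "g = (\<lambda>k p. lam p * I (a,b) p * a $ k - mu p * I (a,b) p * b $ k)"
    have gi: "integrable \<gamma> (g k)" for k
      unfolding g_def using int_lI[of "(a,b)"] int_mI[of "(a,b)"] by (intro Bochner_Integration.integrable_diff Bochner_Integration.integrable_mult_left) auto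
    have "l1norm (\<alpha> a b *\<^sub>R a - \<beta> a b *\<^sub>R b) = (\<Sum>k\<in>UNIV. \<bar>integral\<^sup>L \<gamma> (g k)\<bar>)"
      unfolding l1norm_def g_def \<alpha>_def \<beta>_def
      using int_lI[of "(a,b)"] int_mI[of "(a,b)"]
      by (simp add: Bochner_Integration.integral_diff integral_mult_left_zero)
    also have "\<dots> \<le> (\<Sum>k\<in>UNIV. integral\<^sup>L \<gamma> (\<lambda>p. \<bar>g k p\<bar>))"
      by (intro sum_mono integral_abs_bound)
    also have "\<dots> = integral\<^sup>L \<gamma> (\<lambda>p. \<Sum>k\<in>UNIV. \<bar>g k p\<bar>)"
      using gi by (simp add: Bochner_Integration.integral_sum)
    also have "(\<lambda>p. \<Sum>k\<in>UNIV. \<bar>g k p\<bar>) = (\<lambda>p. I (a,b) p * h p)"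
    proof
      fix p
      show "(\<Sum>k\<in>UNIV. \<bar>g k p\<bar>) = I (a,b) p * h p"
      proof (cases "(a,b) = (fst p, Y p)")
        case True
        then show ?thesis by (auto simp: g_def Ieq h_def l1norm_def)
      next
        case False
        then show ?thesis by (auto simp: g_def Ieq h_def l1norm_def)
      qed
    qed
    finally show ?thesis .
  qed
  define R where "R = (\<lambda>p. (\<Sum>q\<in>?S. I q p * h p - lam p * I q p - mu p * I q p) + lam p + mu p
      - 2 * (lam p * indicator (- ?U) (fst p)) - 2 * (mu p * indicator (- ?V) (Y p)))"
  have Rle: "R p \<le> h p" if "p \<in> space3" for p
  proof -
    have "(\<Sum>q\<in>?S. I q p * h p - lam p * I q p - mu p * I q p) =
        (\<Sum>q\<in>?S. (if q = (fst p, Y p) then 1 else 0) * (h p - lam p - mu p))"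
      by (intro sum.cong) (auto simp: Ieq)
    moreover have "\<bar>lam p - mu p\<bar> \<le> h p"
      unfolding h_def using pb[OF that] by (intro l1norm_lower) auto
    ultimately show ?thesis
      unfolding R_def using pointwise[OF uf vf, of "lam p" "mu p" "h p" "fst p" "Y p"] pb[OF that] hb[OF that]
      by simp
  qed
  have key2: "(\<Sum>q\<in>?S. integral\<^sup>L \<gamma> (\<lambda>p. I q p * h p) - \<alpha> (fst q) (snd q) - \<beta> (fst q) (snd q)) + 2
      \<le> integral\<^sup>L \<gamma> h"
  proof -
    have "integral\<^sup>L \<gamma> R = (\<Sum>q\<in>?S. integral\<^sup>L \<gamma> (\<lambda>p. I q p * h p) - integral\<^sup>L \<gamma> (\<lambda>p. lam p * I q p)
        - integral\<^sup>L \<gamma> (\<lambda>p. mu p * I q p)) + integral\<^sup>L \<gamma> lam + integral\<^sup>L \<gamma> mu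
        - 2 * integral\<^sup>L \<gamma> (\<lambda>p. lam p * indicator (- ?U) (fst p))
        - 2 * integral\<^sup>L \<gamma> (\<lambda>p. mu p * indicator (- ?V) (Y p))"
      unfolding R_def
      using int_Ih int_lI int_mI A.Lint B.Lint A.Aint B.Aint
      by (simp add: Bochner_Integration.integral_diff Bochner_Integration.integral_add Bochner_Integration.integral_sum
          Bochner_Integration.integrable_sum integral_mult_right_zero)
    also have "\<dots> = (\<Sum>q\<in>?S. integral\<^sup>L \<gamma> (\<lambda>p. I q p * h p) - \<alpha> (fst q) (snd q) - \<beta> (fst q) (snd q)) + 2"
      using A.G1 B.G1 A.G3 B.G3 by (simp add: \<alpha>_def \<beta>_def)
    finally have eR: "integral\<^sup>L \<gamma> R = \<dots>" .
    have "integral\<^sup>L \<gamma> R \<le> integral\<^sup>L \<gamma> h"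
    proof (rule integral_mono)
      show "integrable \<gamma> R"
        unfolding R_def
        using int_Ih int_lI int_mI A.Lint B.Lint A.Aint B.Aint
        by (simp add: Bochner_Integration.integrable_sum)
      show "integrable \<gamma> h" by (rule int_h)
      fix p assume "p \<in> space \<gamma>"
      then show "R p \<le> h p" using Rle sp by auto
    qed
    then show ?thesis using eR by simp
  qed
  have hfun: "(\<lambda>(x,y,l,m). l1norm (l *\<^sub>R x - m *\<^sub>R y)) = h"
    by (auto simp: h_def lam_def mu_def Y_def)
  have "2 + (\<Sum>(x,y)\<in>?S. l1norm (\<alpha> x y *\<^sub>R x - \<beta> x y *\<^sub>R y) - \<alpha> x y - \<beta> x y)
      \<le> 2 + (\<Sum>q\<in>?S. integral\<^sup>L \<gamma> (\<lambda>p. I q p * h p) - \<alpha> (fst q) (snd q) - \<beta> (fst q) (snd q))"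
    by (simp add: case_prod_beta) (intro sum_mono, use key1 in \<open>auto\<close>)
  also have "\<dots> \<le> integral\<^sup>L \<gamma> h" using key2 by simp
  finally show ?thesis using inM5 hfun by auto
qed


lemma d5_bdd:
  fixes u v :: "(real ^ 'k::finite) pmf"
  assumes uf: "finite (set_pmf u)" and vf: "finite (set_pmf v)"
  shows "bdd_below ((\<lambda>(\<alpha>,\<beta>). 2 + (\<Sum>(x,y)\<in>set_pmf u \<times> set_pmf v.
        l1norm (\<alpha> x y *\<^sub>R x - \<beta> x y *\<^sub>R y) - \<alpha> x y - \<beta> x y)) ` M5 u v)"
proof (rule bdd_belowI[where m=0])
  fix z assume "z \<in> (\<lambda>(\<alpha>,\<beta>). 2 + (\<Sum>(x,y)\<in>set_pmf u \<times> set_pmf v.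
        l1norm (\<alpha> x y *\<^sub>R x - \<beta> x y *\<^sub>R y) - \<alpha> x y - \<beta> x y)) ` M5 u v"
  then obtain \<alpha> \<beta> where ab: "(\<alpha>,\<beta>) \<in> M5 u v" and z: "z = 2 + (\<Sum>(x,y)\<in>set_pmf u \<times> set_pmf v.
        l1norm (\<alpha> x y *\<^sub>R x - \<beta> x y *\<^sub>R y) - \<alpha> x y - \<beta> x y)" by auto
  let ?U = "set_pmf u" and ?V = "set_pmf v"
  have r: "\<And>x. x \<in> ?U \<Longrightarrow> (\<Sum>y\<in>?V. \<alpha> x y) \<le> pmf u x" and c: "\<And>y. y \<in> ?V \<Longrightarrow> (\<Sum>x\<in>?U. \<beta> x y) \<le> pmf v y"
    using ab by (auto simp: M5_def)
  have sa: "(\<Sum>(x,y)\<in>?U \<times> ?V. \<alpha> x y) \<le> 1"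
  proof -
    have "(\<Sum>(x,y)\<in>?U \<times> ?V. \<alpha> x y) = (\<Sum>x\<in>?U. \<Sum>y\<in>?V. \<alpha> x y)" by (simp add: sum.cartesian_product)
    also have "\<dots> \<le> (\<Sum>x\<in>?U. pmf u x)" by (intro sum_mono r)
    also have "\<dots> = 1" using uf by (simp add: sum_pmf_eq_1)
    finally show ?thesis .
  qed
  have sb: "(\<Sum>(x,y)\<in>?U \<times> ?V. \<beta> x y) \<le> 1"
  proof -
    have "(\<Sum>(x,y)\<in>?U \<times> ?V. \<beta> x y) = (\<Sum>x\<in>?U. \<Sum>y\<in>?V. \<beta> x y)" by (simp add: sum.cartesian_product)
    also have "\<dots> = (\<Sum>y\<in>?V. \<Sum>x\<in>?U. \<beta> x y)" by (rule sum.swap)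
    also have "\<dots> \<le> (\<Sum>y\<in>?V. pmf v y)" by (intro sum_mono c)
    also have "\<dots> = 1" using vf by (simp add: sum_pmf_eq_1)
    finally show ?thesis .
  qed
  have "(\<Sum>(x,y)\<in>?U \<times> ?V. - \<alpha> x y - \<beta> x y) \<le> (\<Sum>(x,y)\<in>?U \<times> ?V.
        l1norm (\<alpha> x y *\<^sub>R x - \<beta> x y *\<^sub>R y) - \<alpha> x y - \<beta> x y)"
    by (intro sum_mono) (auto simp: l1norm_nonneg)
  moreover have "(\<Sum>(x,y)\<in>?U \<times> ?V. - \<alpha> x y - \<beta> x y) = - (\<Sum>(x,y)\<in>?U \<times> ?V. \<alpha> x y) - (\<Sum>(x,y)\<in>?U \<times> ?V. \<beta> x y)"
    by (simp add: case_prod_beta sum_subtractf sum_negf)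
  ultimately show "0 \<le> z" using sa sb z by linarith
qed

theorem lemma5:
  fixes u v :: "(real ^ 'k::finite) pmf"
  assumes "set_pmf u \<subseteq> DeltaK" and "set_pmf v \<subseteq> DeltaK"
    and "finite (set_pmf u)" and "finite (set_pmf v)"
  shows "d3 u v \<ge> d5 u v"
  unfolding d3_def
proof (rule cInf_greatest)
  show "(\<lambda>\<gamma>. integral\<^sup>L \<gamma> (\<lambda>(x,y,l,m). l1norm (l *\<^sub>R x - m *\<^sub>R y))) ` M3 u v \<noteq> {}"
    using M3_nonempty[OF assms(1,2)] by simp
  fix z assume "z \<in> (\<lambda>\<gamma>. integral\<^sup>L \<gamma> (\<lambda>(x,y,l,m). l1norm (l *\<^sub>R x - m *\<^sub>R y))) ` M3 u v"
  then obtain \<gamma> where g: "\<gamma> \<in> M3 u v" and z: "z = integral\<^sup>L \<gamma> (\<lambda>(x,y,l,m). l1norm (l *\<^sub>R x - m *\<^sub>R y))"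
    by auto
  obtain \<alpha> \<beta> where ab: "(\<alpha>,\<beta>) \<in> M5 u v" and le: "2 + (\<Sum>(x,y)\<in>set_pmf u \<times> set_pmf v.
        l1norm (\<alpha> x y *\<^sub>R x - \<beta> x y *\<^sub>R y) - \<alpha> x y - \<beta> x y) \<le> z"
    using main_bound[OF assms g] z by blast
  have "d5 u v \<le> 2 + (\<Sum>(x,y)\<in>set_pmf u \<times> set_pmf v.
        l1norm (\<alpha> x y *\<^sub>R x - \<beta> x y *\<^sub>R y) - \<alpha> x y - \<beta> x y)"
    unfolding d5_def
    by (rule cInf_lower[OF _ d5_bdd[OF assms(3,4)]]) (use ab in force)
  then show "d5 u v \<le> z" using le by linarith
qed

end
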